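(* Let $G$ and $H$ be connected graphs, each with at least $3$ vertices, let $\ell_1=\lambda_3(G)$, $\ell_2=\lambda_3(H)$, $n_2=|V(H)|$. Let $S=\{x,y,z\}$ be a set of three distinct vertices of $G\circ H$ all lying in the same $H$-layer $H(u)$ for some $u\in V(G)$. Then $G\circ H$ contains at least $\ell_2+\ell_1 n_2$ pairwise edge-disjoint $S$-trees.
   Context: For a graph $G$ and $S\subseteq V(G)$ with $|S|\ge 2$, an $S$-tree is a subgraph that is a tree containing all vertices of $S$; $\lambda(S)$ is the maximum number of pairwise edge-disjoint $S$-trees, and $\lambda_3(G)=\min\{\lambda(S): |S|=3\}$. The lexicographic product $G\circ H$ has vertex set $V(G)\times V(H)$, and $(u,v)$ is adjacent to $(u',v')$ iff either $uu'\in E(G)$, or $u=u'$ and $vv'\in E(H)$. For $u\in V(G)$, the $H$-layer $H(u)$ is the vertex set $\{(u,v): v\in V(H)\}$. *)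

theory Defs
  imports Main
begin

type_synonym 'a sgraph = "'a set \<times> 'a set set"

definition verts :: "'a sgraph \<Rightarrow> 'a set" where "verts G = fst G"
definition edges :: "'a sgraph \<Rightarrow> 'a set set" where "edges G = snd G"

definition graph :: "'a sgraph \<Rightarrow> bool" where
  "graph G \<longleftrightarrow> finite (verts G) \<and>
     (\<forall>e\<in>edges G. \<exists>a b. a \<noteq> b \<and> e = {a, b} \<and> a \<in> verts G \<and> b \<in> verts G)"

definition connected :: "'a sgraph \<Rightarrow> bool" where
  "connected G \<longleftrightarrow> (\<forall>a\<in>verts G. \<forall>b\<in>verts G.
     (a, b) \<in> {(p, q). {p, q} \<in> edges G}\<^sup>*)"

definition has_cycle :: "'a sgraph \<Rightarrow> bool" where
  "has_cycle G \<longleftrightarrow> (\<exists>vs. length vs \<ge> 3 \<and> distinct vs \<and> set vs \<subseteq> verts G \<and>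
     (\<forall>i < length vs. {vs ! i, vs ! ((i + 1) mod length vs)} \<in> edges G))"

definition is_tree :: "'a sgraph \<Rightarrow> bool" where
  "is_tree T \<longleftrightarrow> graph T \<and> verts T \<noteq> {} \<and> connected T \<and> \<not> has_cycle T"

definition subgraph :: "'a sgraph \<Rightarrow> 'a sgraph \<Rightarrow> bool" where
  "subgraph T G \<longleftrightarrow> verts T \<subseteq> verts G \<and> edges T \<subseteq> edges G \<and>
     (\<forall>e\<in>edges T. e \<subseteq> verts T)"

definition S_tree :: "'a sgraph \<Rightarrow> 'a set \<Rightarrow> 'a sgraph \<Rightarrow> bool" where
  "S_tree G S T \<longleftrightarrow> subgraph T G \<and> is_tree T \<and> S \<subseteq> verts T"

definition has_k_disjoint_S_trees :: "'a sgraph \<Rightarrow> 'a set \<Rightarrow> nat \<Rightarrow> bool" where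
  "has_k_disjoint_S_trees G S k \<longleftrightarrow> (\<exists>T :: nat \<Rightarrow> 'a sgraph.
     (\<forall>i<k. S_tree G S (T i)) \<and>
     (\<forall>i<k. \<forall>j<k. i \<noteq> j \<longrightarrow> edges (T i) \<inter> edges (T j) = {}))"

definition lambda_S :: "'a sgraph \<Rightarrow> 'a set \<Rightarrow> nat" where
  "lambda_S G S = Max {k. has_k_disjoint_S_trees G S k}"

definition lambda3 :: "'a sgraph \<Rightarrow> nat" where
  "lambda3 G = Min {lambda_S G S | S. S \<subseteq> verts G \<and> card S = 3}"

definition lex_prod :: "'a sgraph \<Rightarrow> 'b sgraph \<Rightarrow> ('a \<times> 'b) sgraph" where
  "lex_prod G H = (verts G \<times> verts H,
     {{(u, v), (u', v')} | u v u' v'.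
        u \<in> verts G \<and> u' \<in> verts G \<and> v \<in> verts H \<and> v' \<in> verts H \<and>
        ({u, u'} \<in> edges G \<or> (u = u' \<and> {v, v'} \<in> edges H))})"

definition H_layer :: "'a sgraph \<Rightarrow> 'b sgraph \<Rightarrow> 'a \<Rightarrow> ('a \<times> 'b) set" where
  "H_layer G H u = {(u, v) | v. v \<in> verts H}"

end

theory Submission
  imports Defs
begin


definition nbrs :: "'a sgraph \<Rightarrow> 'a \<Rightarrow> 'a set" where
  "nbrs G s = {w. {s, w} \<in> edges G}"

lemma tree_edge_at:
  assumes "S_tree G S T" "s \<in> S" "s' \<in> S" "s \<noteq> s'"
  shows "\<exists>w. {s, w} \<in> edges T"
proof -
  have "connected T" "s \<in> verts T" "s' \<in> verts T" using assms unfolding S_tree_def is_tree_def by auto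
  then have "(s, s') \<in> {(p, q). {p, q} \<in> edges T}\<^sup>*" unfolding connected_def by blast
  then show ?thesis using assms(4)
    by (cases rule: converse_rtranclE) auto
qed

lemma nbrs_finite: "graph G \<Longrightarrow> finite (nbrs G s)"
proof -
  assume g: "graph G"
  have "nbrs G s \<subseteq> verts G"
  proof
    fix w assume "w \<in> nbrs G s"
    then have "{s,w} \<in> edges G" by (simp add: nbrs_def)
    then obtain a b where "{s,w} = {a,b}" "a \<in> verts G" "b \<in> verts G" using g unfolding graph_def by blast
    then show "w \<in> verts G" by (metis doubleton_eq_iff)
  qed
  then show ?thesis using g unfolding graph_def by (meson finite_subset)
qed

lemma k_le_deg:
  assumes "graph G" "has_k_disjoint_S_trees G S k" "s \<in> S" "s' \<in> S" "s \<noteq> s'"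
  shows "k \<le> card (nbrs G s)"
proof -
  obtain T where T: "\<forall>i<k. S_tree G S (T i)"
     "\<forall>i<k. \<forall>j<k. i \<noteq> j \<longrightarrow> edges (T i) \<inter> edges (T j) = {}"
    using assms(2) unfolding has_k_disjoint_S_trees_def by blast
  define f where "f i = (SOME w. {s, w} \<in> edges (T i))" for i
  have fe: "{s, f i} \<in> edges (T i)" if "i < k" for i
    using tree_edge_at[OF T(1)[rule_format, OF that] assms(3-5)] unfolding f_def by (rule someI_ex)
  have "inj_on f {..<k}"
  proof (rule inj_onI)
    fix i j assume "i \<in> {..<k}" "j \<in> {..<k}" "f i = f j"
    then have "i < k" "j < k" by auto
    show "i = j"
    proof (rule ccontr)
      assume "i \<noteq> j"
      have "{s, f i} \<in> edges (T i)" "{s, f i} \<in> edges (T j)" using fe[OF \<open>i<k\<close>] fe[OF \<open>j<k\<close>] \<open>f i = f j\<close> by simp_all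
      then show False using T(2) \<open>i<k\<close> \<open>j<k\<close> \<open>i \<noteq> j\<close> by blast
    qed
  qed
  moreover have "f ` {..<k} \<subseteq> nbrs G s"
  proof
    fix w assume "w \<in> f ` {..<k}"
    then obtain i where "i < k" "w = f i" by auto
    have "edges (T i) \<subseteq> edges G" using T(1) \<open>i<k\<close> unfolding S_tree_def subgraph_def by simp
    then show "w \<in> nbrs G s" using fe[OF \<open>i<k\<close>] \<open>w = f i\<close> unfolding nbrs_def by auto
  qed
  ultimately have "card {..<k} \<le> card (nbrs G s)" using card_inj_on_le nbrs_finite[OF assms(1)] by blast
  then show ?thesis by simp
qed

lemma lambdaS_has:
  assumes "graph G" "s \<in> S" "s' \<in> S" "s \<noteq> s'"
  shows "has_k_disjoint_S_trees G S (lambda_S G S)" "lambda_S G S \<le> card (nbrs G s)"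
proof -
  let ?K = "{k. has_k_disjoint_S_trees G S k}"
  have b: "?K \<subseteq> {..card (nbrs G s)}" using k_le_deg[OF assms(1) _ assms(2-4)] by auto
  have "0 \<in> ?K" unfolding has_k_disjoint_S_trees_def by simp
  moreover have "finite ?K" using b finite_subset by blast
  ultimately have "Max ?K \<in> ?K" by (intro Max_in) auto
  then show "has_k_disjoint_S_trees G S (lambda_S G S)" "lambda_S G S \<le> card (nbrs G s)"
    using b unfolding lambda_S_def by auto
qed

lemma lambda3_le:
  assumes "finite (verts G)" "S \<subseteq> verts G" "card S = 3"
  shows "lambda3 G \<le> lambda_S G S"
proof -
  have "{lambda_S G S | S. S \<subseteq> verts G \<and> card S = 3} \<subseteq> lambda_S G ` Pow (verts G)" by auto
  then have "finite {lambda_S G S | S. S \<subseteq> verts G \<and> card S = 3}"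
    using assms(1) by (meson finite_Pow_iff finite_imageI finite_subset)
  then show ?thesis unfolding lambda3_def using assms by (intro Min_le) auto
qed

lemma has_k_mono: "has_k_disjoint_S_trees G S k \<Longrightarrow> j \<le> k \<Longrightarrow> has_k_disjoint_S_trees G S j"
proof -
  assume a: "has_k_disjoint_S_trees G S k" "j \<le> k"
  then obtain T where T: "\<forall>i<k. S_tree G S (T i)"
     "\<forall>i<k. \<forall>j<k. i \<noteq> j \<longrightarrow> edges (T i) \<inter> edges (T j) = {}"
    unfolding has_k_disjoint_S_trees_def by blast
  show ?thesis unfolding has_k_disjoint_S_trees_def
  proof (rule exI[of _ T], intro conjI allI impI)
    fix i assume "i < j"
    then show "S_tree G S (T i)" using T(1) a(2) by simp
  next
    fix i i' assume "i < j" "i' < j" "i \<noteq> i'"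
    then show "edges (T i) \<inter> edges (T i') = {}" using T(2) a(2) by simp
  qed
qed

lemma three_in:
  assumes "finite V" "card V \<ge> 3" "s \<in> V"
  shows "\<exists>S. S \<subseteq> V \<and> card S = 3 \<and> s \<in> S"
proof -
  have "card (V - {s}) \<ge> 2" using assms by auto
  then obtain S' where "S' \<subseteq> V - {s}" "card S' = 2" by (meson obtain_subset_with_card_n)
  then show ?thesis
  proof (intro exI[of _ "insert s S'"] conjI)
    have "finite S'" using \<open>card S' = 2\<close> card.infinite by fastforce
    then show "card (insert s S') = 3" using \<open>S' \<subseteq> V - {s}\<close> \<open>card S' = 2\<close> 
    proof -
      have "s \<notin> S'" using \<open>S' \<subseteq> V - {s}\<close> by blast
      then have "card (insert s S') = Suc (card S')" using \<open>finite S'\<close> by simp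
      then show ?thesis using \<open>card S' = 2\<close> by simp
    qed
  qed (use \<open>S' \<subseteq> V - {s}\<close> assms in auto)
qed




lemma no_cycle_center:
  assumes "\<forall>e\<in>edges T. c \<in> e"
  shows "\<not> has_cycle T"
proof
  assume "has_cycle T"
  then obtain vs where "length vs \<ge> 3 \<and> distinct vs \<and> set vs \<subseteq> verts T \<and>
     (\<forall>i < length vs. {vs ! i, vs ! ((i + 1) mod length vs)} \<in> edges T)"
    unfolding has_cycle_def by (rule exE)
  then have v: "length vs \<ge> 3" "distinct vs"
    "\<forall>i < length vs. {vs ! i, vs ! ((i + 1) mod length vs)} \<in> edges T" by simp_all
  let ?n = "length vs"
  have "{vs ! 0, vs ! 1} \<in> edges T" proof -
    have "vs \<noteq> []" using v(1) by auto
    then show ?thesis using v(3)[rule_format, of 0] v(1) by simp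
  qed
  then have e0: "c \<in> {vs ! 0, vs ! 1}" by (rule bspec[OF assms])
  have "(1 + 1) mod ?n = 2" using v(1) by simp
  then have "{vs ! 1, vs ! 2} \<in> edges T" using v(3)[rule_format, of 1] v(1) by (simp add: numeral_2_eq_2)
  then have e1: "c \<in> {vs ! 1, vs ! 2}" by (rule bspec[OF assms])
  have "?n - 1 + 1 = ?n" using v(1) by simp
  then have "(?n - 1 + 1) mod ?n = 0" by simp
  then have "{vs ! (?n - 1), vs ! 0} \<in> edges T" using v(3)[rule_format, of "?n - 1"] v(1) by simp
  then have e2: "c \<in> {vs ! (?n - 1), vs ! 0}" by (rule bspec[OF assms])
  have d: "i < ?n \<Longrightarrow> j < ?n \<Longrightarrow> vs ! i = vs ! j \<Longrightarrow> i = j" for i j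
    using v(2) by (simp add: nth_eq_iff_index_eq)
  show False
  proof (cases "c = vs ! 1")
    case True
    have "vs ! 0 \<noteq> vs ! 1" using d[of 0 1] v(1) by force
    moreover have "vs ! (?n - 1) \<noteq> vs ! 1" using d[of "?n - 1" 1] v(1) by force
    ultimately show ?thesis using e2 True by simp
  next
    case False
    have "vs ! 0 \<noteq> vs ! 2" using d[of 0 2] v(1) by force
    then show ?thesis using e0 e1 False by auto
  qed
qed

definition star :: "'v \<Rightarrow> 'v set \<Rightarrow> 'v sgraph" where
  "star c L = (insert c L, (\<lambda>l. {c, l}) ` L)"

lemma star_tree:
  assumes "finite L" "c \<notin> L"
  shows "is_tree (star c L)"
  unfolding is_tree_def
proof (intro conjI)
  show "graph (star c L)" unfolding graph_def star_def verts_def edges_def using assms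
  proof (simp, intro ballI)
    fix l assume "l \<in> L"
    then show "\<exists>a b. a \<noteq> b \<and> {c, l} = {a, b} \<and> (a = c \<or> a \<in> L) \<and> (b = c \<or> b \<in> L)"
      using assms(2) by (intro exI[of _ c] exI[of _ l]) auto
  qed
  show "verts (star c L) \<noteq> {}" unfolding star_def verts_def by auto
  show "\<not> has_cycle (star c L)" by (rule no_cycle_center[of _ c]) (auto simp: star_def edges_def)
  let ?R = "{(p, q). {p, q} \<in> edges (star c L)}"
  have toc: "(p, c) \<in> ?R\<^sup>*" if "p \<in> verts (star c L)" for p
  proof (cases "p = c")
    case False
    then have "p \<in> L" using that by (simp add: star_def verts_def)
    then have "{c, p} \<in> edges (star c L)" by (simp add: star_def edges_def)
    then have "{p, c} \<in> edges (star c L)" by (subst insert_commute)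
    then have "(p, c) \<in> ?R" by simp
    then show ?thesis by (rule r_into_rtrancl)
  qed simp
  have fromc: "(c, p) \<in> ?R\<^sup>*" if "p \<in> verts (star c L)" for p
  proof (cases "p = c")
    case False
    then have "p \<in> L" using that by (simp add: star_def verts_def)
    then have "{c, p} \<in> edges (star c L)" by (simp add: star_def edges_def)
    then have "(c, p) \<in> ?R" by simp
    then show ?thesis by (rule r_into_rtrancl)
  qed simp
  show "connected (star c L)" unfolding connected_def
  proof (intro ballI)
    fix p q assume "p \<in> verts (star c L)" "q \<in> verts (star c L)"
    then show "(p, q) \<in> ?R\<^sup>*" by (rule rtrancl_trans[OF toc fromc])
  qed
qed

definition lift :: "'a \<Rightarrow> 'b sgraph \<Rightarrow> ('a \<times> 'b) sgraph" where
  "lift u T = (Pair u ` verts T, (\<lambda>e. Pair u ` e) ` edges T)"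

lemma lift_tree:
  assumes "is_tree T"
  shows "is_tree (lift u T)"
  unfolding is_tree_def
proof (intro conjI)
  have g: "graph T" "verts T \<noteq> {}" "connected T" "\<not> has_cycle T" using assms unfolding is_tree_def by auto
  show "graph (lift u T)" unfolding graph_def
  proof (intro conjI ballI)
    show "finite (verts (lift u T))" using g(1) by (simp add: graph_def lift_def verts_def)
    fix e assume "e \<in> edges (lift u T)"
    then obtain e' where e': "e' \<in> edges T" "e = Pair u ` e'" by (auto simp: lift_def edges_def)
    have "\<forall>e\<in>edges T. \<exists>a b. a \<noteq> b \<and> e = {a, b} \<and> a \<in> verts T \<and> b \<in> verts T"
      using g(1) by (simp add: graph_def)
    then have "\<exists>a b. a \<noteq> b \<and> e' = {a, b} \<and> a \<in> verts T \<and> b \<in> verts T" using e'(1) by (rule bspec)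
    then obtain a b where ab: "a \<noteq> b" "e' = {a, b}" "a \<in> verts T" "b \<in> verts T" by (elim exE conjE)
    show "\<exists>a b. a \<noteq> b \<and> e = {a, b} \<and> a \<in> verts (lift u T) \<and> b \<in> verts (lift u T)"
      by (rule exI[of _ "(u,a)"], rule exI[of _ "(u,b)"]) (use ab e' in \<open>auto simp: lift_def verts_def\<close>)
  qed
  show "verts (lift u T) \<noteq> {}" using g(2) unfolding lift_def verts_def by auto
  let ?R = "{(p, q). {p, q} \<in> edges T}"
  let ?R' = "{(p, q). {p, q} \<in> edges (lift u T)}"
  have "((u, a), (u, b)) \<in> ?R'\<^sup>*" if "(a, b) \<in> ?R\<^sup>*" for a b
    using that
  proof (induction rule: rtrancl_induct)
    case (step b c)
    then have "{b, c} \<in> edges T" by simp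
    then have "Pair u ` {b, c} \<in> (\<lambda>e. Pair u ` e) ` edges T" by (rule imageI)
    then have "Pair u ` {b, c} \<in> edges (lift u T)" by (simp only: lift_def edges_def snd_conv)
    then have "((u, b), (u, c)) \<in> ?R'" by simp
    then show ?case using step.IH by (rule rtrancl.rtrancl_into_rtrancl[rotated])
  qed simp
  then show "connected (lift u T)" using g(3) unfolding connected_def
  proof (intro ballI)
    fix p q assume h: "p \<in> verts (lift u T)" "q \<in> verts (lift u T)"
      and c: "\<forall>a\<in>verts T. \<forall>b\<in>verts T. (a, b) \<in> ?R\<^sup>*"
      and l: "\<And>a b. (a, b) \<in> ?R\<^sup>* \<Longrightarrow> ((u, a), (u, b)) \<in> ?R'\<^sup>*"
    obtain a b where "p = (u,a)" "q = (u,b)" "a \<in> verts T" "b \<in> verts T" using h by (auto simp: lift_def verts_def)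
    then show "(p, q) \<in> ?R'\<^sup>*" using c l by simp
  qed
  show "\<not> has_cycle (lift u T)"
  proof
    assume "has_cycle (lift u T)"
    then obtain vs where "length vs \<ge> 3 \<and> distinct vs \<and> set vs \<subseteq> verts (lift u T) \<and>
      (\<forall>i < length vs. {vs ! i, vs ! ((i + 1) mod length vs)} \<in> edges (lift u T))"
      unfolding has_cycle_def by (rule exE)
    then have v: "length vs \<ge> 3" "distinct vs" "set vs \<subseteq> verts (lift u T)"
      "\<forall>i < length vs. {vs ! i, vs ! ((i + 1) mod length vs)} \<in> edges (lift u T)" by simp_all
    have fs: "fst p = u" if "p \<in> set vs" for p using v(3) that by (auto simp: lift_def verts_def)
    have "inj_on snd (set vs)" using fs by (intro inj_onI) (metis prod.expand)
    then have "distinct (map snd vs)" using v(2) by (simp add: distinct_map)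
    moreover have "set (map snd vs) \<subseteq> verts T" using v(3) by (auto simp: lift_def verts_def)
    moreover have "{map snd vs ! i, map snd vs ! ((i + 1) mod length (map snd vs))} \<in> edges T"
      if i: "i < length (map snd vs)" for i
    proof -
      have "length vs > 0" using v(1) by linarith
      then have j: "(i + 1) mod length vs < length vs" by (rule mod_less_divisor)
      obtain e where e: "e \<in> edges T" "{vs ! i, vs ! ((i + 1) mod length vs)} = Pair u ` e"
        using v(4) i by (auto simp: lift_def edges_def)
      have "snd ` {vs ! i, vs ! ((i + 1) mod length vs)} = e" using e(2) by (simp add: image_image)
      then show ?thesis using e(1) i j by simp
    qed
    ultimately have "has_cycle T" unfolding has_cycle_def using v(1)
      by (intro exI[of _ "map snd vs"]) auto
    then show False using g(4) by simp
  qed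
qed




lemma star_center_eq:
  assumes "fst c \<noteq> u" "fst c' \<noteq> u" "\<forall>l\<in>L. fst l = u" "\<forall>l\<in>L'. fst l = u"
    "e \<in> edges (star c L)" "e \<in> edges (star c' L')"
  shows "c = c'"
proof -
  obtain l l' where "l \<in> L" "l' \<in> L'" "e = {c, l}" "e = {c', l'}"
    using assms(5,6) by (auto simp: star_def edges_def)
  then show ?thesis using assms(1-4) by (metis doubleton_eq_iff)
qed

lemma lift_star_disj:
  assumes "fst c \<noteq> u" "\<forall>l\<in>L. fst l = u"
  shows "edges (lift u T) \<inter> edges (star c L) = {}"
proof (rule ccontr)
  assume "edges (lift u T) \<inter> edges (star c L) \<noteq> {}"
  then obtain e where "e \<in> edges (lift u T)" "e \<in> edges (star c L)" by blast
  then have "e \<in> (\<lambda>e. Pair u ` e) ` edges T" "e \<in> (\<lambda>l. {c, l}) ` L" by (simp_all add: lift_def star_def edges_def)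
  then obtain e' where "e = Pair u ` e'" by blast
  moreover have "c \<in> e" using \<open>e \<in> (\<lambda>l. {c, l}) ` L\<close> by blast
  ultimately have "c \<in> Pair u ` e'" by blast
  then show False using assms(1) by auto
qed

lemma lift_disj:
  "edges T \<inter> edges T' = {} \<Longrightarrow> edges (lift u T) \<inter> edges (lift u T') = {}"
proof -
  assume a: "edges T \<inter> edges T' = {}"
  have "inj (Pair u)" by (simp add: inj_on_def)
  then have "inj (\<lambda>e. Pair u ` e)" by (simp add: inj_on_def inj_image_eq_iff)
  show ?thesis
  proof (rule ccontr)
    assume "edges (lift u T) \<inter> edges (lift u T') \<noteq> {}"
    then obtain e where "e \<in> edges (lift u T)" "e \<in> edges (lift u T')" by blast
    then have "e \<in> (\<lambda>e. Pair u ` e) ` edges T" "e \<in> (\<lambda>e. Pair u ` e) ` edges T'" by (simp_all add: lift_def edges_def)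
    then obtain e1 e2 where "e = Pair u ` e1" "e = Pair u ` e2" "e1 \<in> edges T" "e2 \<in> edges T'"
      by blast
    then have "e1 = e2" using \<open>inj (\<lambda>e. Pair u ` e)\<close> by (metis injD)
    then show False using a \<open>e1 \<in> edges T\<close> \<open>e2 \<in> edges T'\<close> by blast
  qed
qed

lemma lift_S_tree:
  assumes "graph H" "u \<in> verts G" "S_tree H S T"
  shows "S_tree (lex_prod G H) (Pair u ` S) (lift u T)"
proof -
  have t: "verts T \<subseteq> verts H" "edges T \<subseteq> edges H" "\<forall>e\<in>edges T. e \<subseteq> verts T" "is_tree T" "S \<subseteq> verts T"
    using assms(3) unfolding S_tree_def subgraph_def by auto
  have "edges (lift u T) \<subseteq> edges (lex_prod G H)"
  proof
    fix e assume "e \<in> edges (lift u T)"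
    then obtain e' where e': "e' \<in> edges T" "e = Pair u ` e'" by (auto simp: lift_def edges_def)
    have eH: "e' \<in> edges H" using e'(1) t(2) by (rule subsetD[rotated])
    have "\<forall>e\<in>edges H. \<exists>a b. a \<noteq> b \<and> e = {a, b} \<and> a \<in> verts H \<and> b \<in> verts H"
      using assms(1) by (simp add: graph_def)
    then have "\<exists>a b. a \<noteq> b \<and> e' = {a, b} \<and> a \<in> verts H \<and> b \<in> verts H" using eH by (rule bspec)
    then obtain a b where ab: "a \<noteq> b" "e' = {a, b}" "a \<in> verts H" "b \<in> verts H" by (elim exE conjE)
    have "{a,b} \<in> edges H" using eH ab(2) by simp
    have "e = {(u,a),(u,b)}" using e' ab by simp
    then show "e \<in> edges (lex_prod G H)" unfolding lex_prod_def edges_def snd_conv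
      apply (rule_tac CollectI)
      apply (rule exI[of _ u], rule exI[of _ a], rule exI[of _ u], rule exI[of _ b])
      using ab assms(2) \<open>{a,b} \<in> edges H\<close> by (simp add: verts_def edges_def)
  qed
  moreover have "\<forall>e\<in>edges (lift u T). e \<subseteq> verts (lift u T)"
  proof
    fix e assume "e \<in> edges (lift u T)"
    then obtain e' where e': "e' \<in> edges T" "e = Pair u ` e'" by (auto simp: lift_def edges_def)
    then show "e \<subseteq> verts (lift u T)" using t(3) by (auto simp: lift_def verts_def)
  qed
  moreover have "verts (lift u T) \<subseteq> verts (lex_prod G H)"
    using t(1) assms(2) by (auto simp: lift_def verts_def lex_prod_def)
  moreover have "Pair u ` S \<subseteq> verts (lift u T)" using t(5) by (auto simp: lift_def verts_def)
  ultimately show ?thesis using lift_tree[OF t(4)] unfolding S_tree_def subgraph_def by (intro conjI)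
qed

lemma star_S_tree:
  assumes "graph G" "w \<in> nbrs G u" "v \<in> verts H" "a \<in> verts H" "b \<in> verts H" "c \<in> verts H"
  shows "S_tree (lex_prod G H) {(u,a),(u,b),(u,c)} (star (w,v) {(u,a),(u,b),(u,c)})"
proof -
  have "{u, w} \<in> edges G" using assms(2) by (simp add: nbrs_def)
  have "\<forall>e\<in>edges G. \<exists>a b. a \<noteq> b \<and> e = {a, b} \<and> a \<in> verts G \<and> b \<in> verts G"
    using assms(1) by (simp add: graph_def)
  then have "\<exists>a b. a \<noteq> b \<and> {u, w} = {a, b} \<and> a \<in> verts G \<and> b \<in> verts G"
    using \<open>{u, w} \<in> edges G\<close> by (rule bspec)
  then obtain p q where pq: "p \<noteq> q" "{u, w} = {p, q}" "p \<in> verts G" "q \<in> verts G" by (elim exE conjE)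
  then have uw: "u \<noteq> w" "u \<in> verts G" "w \<in> verts G" by (auto simp: doubleton_eq_iff)
  have tr: "is_tree (star (w,v) {(u,a),(u,b),(u,c)})" using uw by (intro star_tree) auto
  have "{(w,v),(u,s)} \<in> edges (lex_prod G H)" if "s \<in> verts H" for s
  proof -
    have "{w,u} \<in> edges G" using \<open>{u, w} \<in> edges G\<close> by (simp add: insert_commute)
    then show ?thesis unfolding lex_prod_def edges_def snd_conv
      apply (rule_tac CollectI)
      apply (rule exI[of _ w], rule exI[of _ v], rule exI[of _ u], rule exI[of _ s])
      using uw assms(3) that by (simp add: verts_def)
  qed
  then have "edges (star (w,v) {(u,a),(u,b),(u,c)}) \<subseteq> edges (lex_prod G H)"
    using assms(4-6) by (auto simp: star_def edges_def)
  moreover have "verts (star (w,v) {(u,a),(u,b),(u,c)}) \<subseteq> verts (lex_prod G H)"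
    using uw assms(3-6) by (simp add: star_def verts_def lex_prod_def)
  moreover have "\<forall>e\<in>edges (star (w,v) {(u,a),(u,b),(u,c)}). e \<subseteq> verts (star (w,v) {(u,a),(u,b),(u,c)})"
    by (auto simp: star_def verts_def edges_def)
  moreover have "{(u,a),(u,b),(u,c)} \<subseteq> verts (star (w,v) {(u,a),(u,b),(u,c)})"
    by (auto simp: star_def verts_def)
  ultimately show ?thesis using tr unfolding S_tree_def subgraph_def by (intro conjI)
qed




theorem lemma3p1:
  fixes G :: "'a sgraph" and H :: "'b sgraph" and x y z :: "'a \<times> 'b" and u :: 'a
  assumes "graph G" and "graph H" and "connected G" and "connected H"
    and "card (verts G) \<ge> 3" and "card (verts H) \<ge> 3"
    and "u \<in> verts G"
    and "x \<in> H_layer G H u" and "y \<in> H_layer G H u" and "z \<in> H_layer G H u"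
    and "x \<noteq> y" and "x \<noteq> z" and "y \<noteq> z"
  shows "has_k_disjoint_S_trees (lex_prod G H) {x, y, z}
           (lambda3 H + lambda3 G * card (verts H))"
proof -
  obtain a b c where abc: "x = (u,a)" "y = (u,b)" "z = (u,c)" "a \<in> verts H" "b \<in> verts H" "c \<in> verts H"
    using assms(8-10) unfolding H_layer_def by blast
  have dabc: "a \<noteq> b" "a \<noteq> c" "b \<noteq> c" using assms(11-13) abc by auto
  define n2 where "n2 = card (verts H)"
  define l1 where "l1 = lambda3 G"
  define l2 where "l2 = lambda3 H"
  have fG: "finite (verts G)" and fH: "finite (verts H)" using assms(1,2) unfolding graph_def by auto
  have n2: "n2 > 0" using assms(6) n2_def by simp
  have cabc: "card {a,b,c} = 3" using dabc by simp
  have "l2 \<le> lambda_S H {a,b,c}" unfolding l2_def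
    using lambda3_le[OF fH _ cabc] abc by simp
  then have "has_k_disjoint_S_trees H {a,b,c} l2"
    using lambdaS_has(1)[OF assms(2), of a "{a,b,c}" b] dabc has_k_mono by blast
  then obtain TH where TH: "\<forall>i<l2. S_tree H {a,b,c} (TH i)"
     "\<forall>i<l2. \<forall>j<l2. i \<noteq> j \<longrightarrow> edges (TH i) \<inter> edges (TH j) = {}"
    unfolding has_k_disjoint_S_trees_def by blast
  obtain SG where SG: "SG \<subseteq> verts G" "card SG = 3" "u \<in> SG" using three_in[OF fG assms(5,7)] by blast
  obtain s' where s': "s' \<in> SG" "s' \<noteq> u"
  proof -
    have "SG \<noteq> {u}" using SG(2) by auto
    then show ?thesis using that SG(3) by blast
  qed
  define N where "N = nbrs G u"
  have "l1 \<le> card N" unfolding l1_def N_def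
    using lambda3_le[OF fG SG(1,2)] lambdaS_has(2)[OF assms(1) SG(3) s'(1) s'(2)[symmetric]] by simp
  obtain f where f: "bij_betw f {0..<card N} N" using ex_bij_betw_nat_finite[OF nbrs_finite[OF assms(1)]]
    unfolding N_def by blast
  obtain g where g: "bij_betw g {0..<n2} (verts H)" using ex_bij_betw_nat_finite[OF fH]
    unfolding n2_def by blast
  define ctr where "ctr j = (f (j div n2), g (j mod n2))" for j
  have ctr_in: "fst (ctr j) \<in> N" "snd (ctr j) \<in> verts H" if "j < l1 * n2" for j
  proof -
    have "j div n2 < l1" using that n2 by (simp add: less_mult_imp_div_less)
    then show "fst (ctr j) \<in> N" using f \<open>l1 \<le> card N\<close> unfolding ctr_def bij_betw_def by auto
    show "snd (ctr j) \<in> verts H" using g n2 unfolding ctr_def bij_betw_def by auto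
  qed
  have ctr_inj: "j = j'" if "j < l1 * n2" "j' < l1 * n2" "ctr j = ctr j'" for j j'
  proof -
    have "j div n2 < l1" "j' div n2 < l1" using that n2 by (simp_all add: less_mult_imp_div_less)
    then have "j div n2 = j' div n2"
      using that(3) f \<open>l1 \<le> card N\<close> unfolding ctr_def bij_betw_def inj_on_def by auto
    moreover have "j mod n2 = j' mod n2"
      using that(3) g n2 unfolding ctr_def bij_betw_def inj_on_def by auto
    ultimately show ?thesis by (metis div_mult_mod_eq)
  qed
  have uN: "w \<noteq> u" if "w \<in> N" for w
  proof -
    have "{u, w} \<in> edges G" using that by (simp add: N_def nbrs_def)
    then show ?thesis using assms(1) unfolding graph_def by (metis doubleton_eq_iff insert_absorb2)
  qed
  define T where "T i = (if i < l2 then lift u (TH i) else star (ctr (i - l2)) {x,y,z})" for i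
  have Sxyz: "{x,y,z} = Pair u ` {a,b,c}" using abc by auto
  have fu: "\<forall>l\<in>{x,y,z}. fst l = u" using abc by auto
  have cu: "fst (ctr j) \<noteq> u" if "j < l1 * n2" for j using uN ctr_in(1)[OF that] by blast
  show ?thesis unfolding has_k_disjoint_S_trees_def l1_def[symmetric] l2_def[symmetric] n2_def[symmetric]
  proof (intro exI[of _ T] conjI allI impI)
    fix i assume i: "i < l2 + l1 * n2"
    show "S_tree (lex_prod G H) {x, y, z} (T i)"
    proof (cases "i < l2")
      case True
      then have "S_tree H {a,b,c} (TH i)" using TH(1) by simp
      then have "S_tree (lex_prod G H) (Pair u ` {a,b,c}) (lift u (TH i))" by (rule lift_S_tree[OF assms(2,7)])
      then show ?thesis unfolding T_def Sxyz using True by simp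
    next
      case False
      then have j: "i - l2 < l1 * n2" using i by simp
      have w: "fst (ctr (i - l2)) \<in> nbrs G u" using ctr_in(1)[OF j] by (simp add: N_def)
      have v: "snd (ctr (i - l2)) \<in> verts H" using ctr_in(2)[OF j] .
      have "S_tree (lex_prod G H) {(u,a),(u,b),(u,c)} (star (fst (ctr (i - l2)), snd (ctr (i - l2))) {(u,a),(u,b),(u,c)})"
        by (rule star_S_tree[OF assms(1) w v abc(4-6)])
      then show ?thesis unfolding T_def abc prod.collapse using False by simp
    qed
  next
    fix i j assume i: "i < l2 + l1 * n2" and j: "j < l2 + l1 * n2" and ij: "i \<noteq> j"
    show "edges (T i) \<inter> edges (T j) = {}"
    proof (cases "i < l2"; cases "j < l2")
      assume "i < l2" "j < l2"
      then have "edges (TH i) \<inter> edges (TH j) = {}" using TH(2) ij by simp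
      then have "edges (lift u (TH i)) \<inter> edges (lift u (TH j)) = {}" by (rule lift_disj)
      then show ?thesis unfolding T_def using \<open>i < l2\<close> \<open>j < l2\<close> by simp
    next
      assume a: "i < l2" "\<not> j < l2"
      then have "j - l2 < l1 * n2" using j by simp
      then have "edges (lift u (TH i)) \<inter> edges (star (ctr (j - l2)) {x,y,z}) = {}"
        by (rule lift_star_disj[OF cu fu])
      then show ?thesis unfolding T_def using a by simp
    next
      assume a: "\<not> i < l2" "j < l2"
      then have "i - l2 < l1 * n2" using i by simp
      then have "edges (lift u (TH j)) \<inter> edges (star (ctr (i - l2)) {x,y,z}) = {}"
        by (rule lift_star_disj[OF cu fu])
      then show ?thesis unfolding T_def using a by (simp add: Int_commute)
    next
      assume a: "\<not> i < l2" "\<not> j < l2"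
      have i2: "i - l2 < l1 * n2" and j2: "j - l2 < l1 * n2" using i j a by simp_all
      show ?thesis
      proof (rule ccontr)
        assume "edges (T i) \<inter> edges (T j) \<noteq> {}"
        then obtain e where e1: "e \<in> edges (star (ctr (i - l2)) {x,y,z})" and e2: "e \<in> edges (star (ctr (j - l2)) {x,y,z})"
          unfolding T_def using a by auto
        have "ctr (i - l2) = ctr (j - l2)"
          by (rule star_center_eq[OF cu[OF i2] cu[OF j2] fu fu e1 e2])
        then have "i - l2 = j - l2" using ctr_inj i2 j2 by blast
        then show False using a ij by simp
      qed
    qed
  qed
qed


end
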